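(* Let $G$ and $H$ be two nontrivial connected graphs. Then $hn_{cc}(G\circ H)=2$.
   Context: All graphs are finite, simple and undirected. For a graph $G$ and $S\subseteq V(G)$, the cycle interval $\langle S\rangle$ consists of the vertices of $S$ together with every vertex $w\in V(G)\setminus S$ such that $G[S\cup\{w\}]$ contains a cycle through $w$. $S$ is cycle convex if $\langle S\rangle=S$. The cycle convex hull $\langle S\rangle_C$ is the smallest cycle convex set containing $S$. A hull set is a set $S$ with $\langle S\rangle_C=V(G)$, and $hn_{cc}(G)$ is the minimum cardinality of a hull set. The lexicographic product $G\circ H$ has vertex set $V(G)\times V(H)$, with $(g_1,h_1)\sim(g_2,h_2)$ iff $g_1\sim g_2$ in $G$, or ($g_1=g_2$ and $h_1\sim h_2$ in $H$). A graph is nontrivial if it has at least two vertices. *)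

theory Defs
  imports Main
begin

definition simple_graph :: "'a set \<Rightarrow> ('a \<Rightarrow> 'a \<Rightarrow> bool) \<Rightarrow> bool" where
  "simple_graph V E \<longleftrightarrow> finite V \<and> (\<forall>u v. E u v \<longrightarrow> u \<in> V \<and> v \<in> V)
     \<and> (\<forall>u v. E u v \<longrightarrow> E v u) \<and> (\<forall>v. \<not> E v v)"

definition connected_graph :: "'a set \<Rightarrow> ('a \<Rightarrow> 'a \<Rightarrow> bool) \<Rightarrow> bool" where
  "connected_graph V E \<longleftrightarrow> V \<noteq> {} \<and> (\<forall>u\<in>V. \<forall>v\<in>V. E\<^sup>*\<^sup>* u v)"

definition is_cycle_in :: "('a \<Rightarrow> 'a \<Rightarrow> bool) \<Rightarrow> 'a set \<Rightarrow> 'a list \<Rightarrow> bool" where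
  "is_cycle_in E T c \<longleftrightarrow> distinct c \<and> length c \<ge> 3 \<and> set c \<subseteq> T
     \<and> (\<forall>i < length c. E (c ! i) (c ! ((i + 1) mod length c)))"

definition cycle_interval :: "'a set \<Rightarrow> ('a \<Rightarrow> 'a \<Rightarrow> bool) \<Rightarrow> 'a set \<Rightarrow> 'a set" where
  "cycle_interval V E S = S \<union> {w \<in> V - S. \<exists>c. is_cycle_in E (S \<union> {w}) c \<and> w \<in> set c}"

definition cycle_convex :: "'a set \<Rightarrow> ('a \<Rightarrow> 'a \<Rightarrow> bool) \<Rightarrow> 'a set \<Rightarrow> bool" where
  "cycle_convex V E S \<longleftrightarrow> S \<subseteq> V \<and> cycle_interval V E S = S"

definition cycle_hull :: "'a set \<Rightarrow> ('a \<Rightarrow> 'a \<Rightarrow> bool) \<Rightarrow> 'a set \<Rightarrow> 'a set" where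
  "cycle_hull V E S = \<Inter> {C. S \<subseteq> C \<and> cycle_convex V E C}"

definition cc_hull_set :: "'a set \<Rightarrow> ('a \<Rightarrow> 'a \<Rightarrow> bool) \<Rightarrow> 'a set \<Rightarrow> bool" where
  "cc_hull_set V E S \<longleftrightarrow> S \<subseteq> V \<and> cycle_hull V E S = V"

definition hull_number_cc :: "'a set \<Rightarrow> ('a \<Rightarrow> 'a \<Rightarrow> bool) \<Rightarrow> nat" where
  "hull_number_cc V E = (LEAST k. \<exists>S. cc_hull_set V E S \<and> card S = k)"

definition lex_vertices :: "'a set \<Rightarrow> 'b set \<Rightarrow> ('a \<times> 'b) set" where
  "lex_vertices VG VH = VG \<times> VH"

definition lex_adj :: "'a set \<Rightarrow> ('a \<Rightarrow> 'a \<Rightarrow> bool) \<Rightarrow> 'b set \<Rightarrow> ('b \<Rightarrow> 'b \<Rightarrow> bool)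
    \<Rightarrow> ('a \<times> 'b) \<Rightarrow> ('a \<times> 'b) \<Rightarrow> bool" where
  "lex_adj VG EG VH EH x y \<longleftrightarrow> fst x \<in> VG \<and> snd x \<in> VH \<and> fst y \<in> VG \<and> snd y \<in> VH \<and>
     (EG (fst x) (fst y) \<or> (fst x = fst y \<and> EH (snd x) (snd y)))"

end

theory Submission
  imports Defs
begin

lemma tri_cycle:
  assumes "E a b" "E b c" "E c a" "distinct [a,b,c]" "{a,b,c} \<subseteq> T"
  shows "is_cycle_in E T [a,b,c]"
proof -
  have "\<forall>i<3. E ([a,b,c] ! i) ([a,b,c] ! ((i + 1) mod 3))"
  proof (intro allI impI)
    fix i :: nat assume "i < 3"
    then have "i = 0 \<or> i = 1 \<or> i = 2" by auto
    then show "E ([a,b,c] ! i) ([a,b,c] ! ((i + 1) mod 3))" using assms by auto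
  qed
  then show ?thesis using assms unfolding is_cycle_in_def by auto
qed

lemma convex_tri:
  assumes "cycle_convex V E C" "w \<in> V" "a \<in> C" "b \<in> C" "E w a" "E a b" "E b w"
    "distinct [w,a,b]"
  shows "w \<in> C"
proof (rule ccontr)
  assume "w \<notin> C"
  have "is_cycle_in E (C \<union> {w}) [w,a,b]"
    by (rule tri_cycle) (use assms in auto)
  then have "w \<in> cycle_interval V E C" using \<open>w \<notin> C\<close> assms(2)
    unfolding cycle_interval_def by auto
  then show False using assms(1) \<open>w \<notin> C\<close> unfolding cycle_convex_def by auto
qed

lemma small_convex:
  assumes "finite S" "card S \<le> 1" "S \<subseteq> V"
  shows "cycle_convex V E S"
proof -
  have "\<not> is_cycle_in E (S \<union> {w}) c" for w c
  proof
    assume "is_cycle_in E (S \<union> {w}) c"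
    then have d: "distinct c" "length c \<ge> 3" "set c \<subseteq> S \<union> {w}"
      unfolding is_cycle_in_def by auto
    have "card (set c) \<le> card (S \<union> {w})" using d(3) assms(1) by (simp add: card_mono)
    also have "\<dots> \<le> card S + 1" using assms(1) by (simp add: card_insert_le_m1)
    finally show False using d distinct_card[OF d(1)] assms(2) by linarith
  qed
  then show ?thesis unfolding cycle_convex_def cycle_interval_def using assms by auto
qed

lemma has_edge:
  assumes "simple_graph V E" "connected_graph V E" "card V \<ge> 2"
  shows "\<exists>u v. E u v"
proof -
  have "finite V" using assms(1) unfolding simple_graph_def by auto
  obtain u v where uv: "u \<in> V" "v \<in> V" "u \<noteq> v"
  proof -
    obtain u where "u \<in> V" using assms(3) by fastforce
    moreover have "V - {u} \<noteq> {}"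
    proof
      assume "V - {u} = {}"
      then have "V = {u}" using \<open>u \<in> V\<close> by auto
      then show False using assms(3) by simp
    qed
    ultimately show ?thesis using that by blast
  qed
  have "E\<^sup>*\<^sup>* u v" using assms(2) uv unfolding connected_graph_def by auto
  then show ?thesis using uv(3) by (cases rule: converse_rtranclpE) auto
qed

theorem mainTheorem2:
  fixes VG :: "'a set" and EG :: "'a \<Rightarrow> 'a \<Rightarrow> bool"
    and VH :: "'b set" and EH :: "'b \<Rightarrow> 'b \<Rightarrow> bool"
  assumes "simple_graph VG EG" and "connected_graph VG EG" and "card VG \<ge> 2"
    and "simple_graph VH EH" and "connected_graph VH EH" and "card VH \<ge> 2"
  shows "hull_number_cc (lex_vertices VG VH) (lex_adj VG EG VH EH) = 2"
proof -
  define V where "V = lex_vertices VG VH"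
  define E where "E = lex_adj VG EG VH EH"
  have sG: "finite VG" "\<And>u v. EG u v \<Longrightarrow> u \<in> VG \<and> v \<in> VG" "\<And>u v. EG u v \<Longrightarrow> EG v u"
    "\<And>v. \<not> EG v v" using assms(1) unfolding simple_graph_def by auto
  have sH: "finite VH" "\<And>u v. EH u v \<Longrightarrow> u \<in> VH \<and> v \<in> VH" "\<And>u v. EH u v \<Longrightarrow> EH v u"
    "\<And>v. \<not> EH v v" using assms(4) unfolding simple_graph_def by auto
  obtain g1 g2 where g: "EG g1 g2" using has_edge[OF assms(1-3)] by blast
  obtain h1 h2 where h: "EH h1 h2" using has_edge[OF assms(4-6)] by blast
  have VV: "V = VG \<times> VH" unfolding V_def lex_vertices_def by simp
  have fV: "finite V" using VV sG(1) sH(1) by simp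
  have row: "{g} \<times> VH \<subseteq> C"
    if C: "cycle_convex V E C" and a: "(g', h1) \<in> C" "(g', h2) \<in> C" and e: "EG g g'" for C g g'
  proof
    fix x assume "x \<in> {g} \<times> VH"
    then obtain h where x: "x = (g, h)" "h \<in> VH" by auto
    have gg: "g \<in> VG" "g' \<in> VG" "g \<noteq> g'" using sG e by metis+
    have hh: "h1 \<in> VH" "h2 \<in> VH" "h1 \<noteq> h2" using sH h by metis+
    show "x \<in> C" unfolding x(1)
      apply (rule convex_tri[OF C, of _ "(g', h1)" "(g', h2)"])
      using gg hh x e h sG(3)[OF e] unfolding VV E_def lex_adj_def by (auto simp: a)
  qed
  have h12: "h1 \<in> VH" "h2 \<in> VH" using sH h by auto
  define S where "S = {(g1, h1), (g1, h2)}"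
  have SV: "S \<subseteq> V" unfolding S_def VV using sG g h12 by auto
  have cS: "card S = 2" unfolding S_def using sH(4) h by (auto simp: card_insert_if)
  have hullS: "cycle_hull V E S = V"
  proof
    have VC: "cycle_convex V E V" unfolding cycle_convex_def cycle_interval_def by auto
    show "cycle_hull V E S \<subseteq> V" unfolding cycle_hull_def using SV VC by auto
    show "V \<subseteq> cycle_hull V E S" unfolding cycle_hull_def
    proof (rule Inter_greatest, safe)
      fix C a b assume "S \<subseteq> C" "cycle_convex V E C" and ab: "(a, b) \<in> V"
      have r2: "{g2} \<times> VH \<subseteq> C"
        by (rule row[OF \<open>cycle_convex V E C\<close> _ _ sG(3)[OF g]]) (use \<open>S \<subseteq> C\<close> S_def in auto)
      have r1: "{g1} \<times> VH \<subseteq> C"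
        by (rule row[OF \<open>cycle_convex V E C\<close> _ _ g]) (use r2 h12 in auto)
      have "EG\<^sup>*\<^sup>* g1 a" using assms(2) ab sG g unfolding connected_graph_def VV by auto
      then have "{a} \<times> VH \<subseteq> C"
      proof (induction rule: rtranclp_induct)
        case base then show ?case by (rule r1)
        case (step y z)
        show ?case
          by (rule row[OF \<open>cycle_convex V E C\<close> _ _ sG(3)[OF step(2)]]) (use step h12 in auto)
      qed
      then show "(a, b) \<in> C" using ab VV by auto
    qed
  qed
  have lower: "2 \<le> k" if ex: "\<exists>S. cc_hull_set V E S \<and> card S = k" for k
  proof (rule ccontr)
    assume "\<not> 2 \<le> k"
    then obtain T where T: "cc_hull_set V E T" "card T \<le> 1" using ex by fastforce
    have TV: "T \<subseteq> V" "cycle_hull V E T = V" using T unfolding cc_hull_set_def by auto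
    have fT: "finite T" using TV fV finite_subset by auto
    have "cycle_convex V E T" by (rule small_convex[OF fT T(2) TV(1)])
    then have "cycle_hull V E T \<subseteq> T" unfolding cycle_hull_def by auto
    then have "T = V" using TV by auto
    moreover have "card V \<ge> 4" unfolding VV card_cartesian_product
      using mult_le_mono[OF assms(3,6)] by simp
    ultimately show False using T(2) by simp
  qed
  have "hull_number_cc V E = 2" unfolding hull_number_cc_def
    apply (rule Least_equality)
    using SV hullS cS lower unfolding cc_hull_set_def by blast+
  then show ?thesis unfolding V_def E_def .
qed

end
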